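(* Let $f$ be analytic on $\mathbb{D}=\{z\in\mathbb{C}:|z|<1\}$ with $\operatorname{Diam} f(\mathbb{D})\le 2$. Then for all $z\in\mathbb{D}$, \[ |f(z)-f(0)|\le |z|\,\frac{2}{1+\sqrt{1-|z|^2}}. \] Moreover, equality holds in this inequality at some point of $\mathbb{D}\setminus\{0\}$ if and only if $f$ is a linear fractional transformation of the form \[ f(z)=c\,\frac{z-b}{1-\bar b z}+a \] for some constants $a\in\mathbb{C}$, $b\in\mathbb{D}\setminus\{0\}$ and $c\in\mathbb{C}$ with $|c|=1$.
   Context: $\operatorname{Diam} f(\mathbb{D})=\sup_{z,w\in\mathbb{D}}|f(z)-f(w)|$. *)

theory Defs
  imports "HOL-Complex_Analysis.Complex_Analysis"
begin

text \<open>Diameter of the image f(D) as in the paper: the supremum of |f z - f w| over z, w in the disk.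
  The condition "Diam f(D) \<le> 2" is the statement that this supremum (in the extended reals) is at most 2,
  i.e. every |f z - f w| is at most 2.\<close>
definition Diam_le :: "(complex \<Rightarrow> complex) \<Rightarrow> complex set \<Rightarrow> real \<Rightarrow> bool" where
  "Diam_le f S r \<longleftrightarrow> (\<forall>z\<in>S. \<forall>w\<in>S. cmod (f z - f w) \<le> r)"

end

theory Submission
  imports Defs
begin


lemma maxmod_const:
  assumes "g holomorphic_on ball 0 1" "\<And>w. w \<in> ball 0 1 \<Longrightarrow> cmod (g w) \<le> 1"
    "w1 \<in> ball 0 1" "cmod (g w1) = 1" "w \<in> ball 0 1"
  shows "g w = g w1"
proof -
  have "g constant_on ball 0 1"
    by (rule maximum_modulus_principle[OF assms(1) open_ball connected_ball open_ball order_refl assms(3)]) (use assms in auto)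
  then show ?thesis using assms(3,5) unfolding constant_on_def by metis
qed

lemma schwarz_pick:
  assumes hol: "g holomorphic_on ball 0 1" and lt: "\<And>w. w \<in> ball 0 1 \<Longrightarrow> cmod (g w) < 1"
    and u: "u \<in> ball 0 1"
  shows "cmod (Moebius_function 0 (g 0) (g u)) \<le> cmod u"
    and "u \<noteq> 0 \<Longrightarrow> cmod (Moebius_function 0 (g 0) (g u)) = cmod u \<Longrightarrow>
          \<exists>\<alpha>. cmod \<alpha> = 1 \<and> (\<forall>w\<in>ball 0 1. Moebius_function 0 (g 0) (g w) = \<alpha> * w)"
proof -
  define k where "k = Moebius_function 0 (g 0) \<circ> g"
  have g0: "cmod (g 0) < 1" using lt by simp
  have holk: "k holomorphic_on ball 0 1" unfolding k_def
    by (rule holomorphic_on_compose_gen[OF hol Moebius_function_holomorphic[OF g0]]) (use lt in auto)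
  have k0: "k 0 = 0" by (simp add: k_def Moebius_function_eq_zero)
  have kn: "\<And>z. norm z < 1 \<Longrightarrow> norm (k z) < 1" using lt g0 Moebius_function_norm_lt_1 by (simp add: k_def)
  have un: "norm u < 1" using u by simp
  note S = Schwarz_Lemma[OF holk k0 kn un]
  show "cmod (Moebius_function 0 (g 0) (g u)) \<le> cmod u" using S(1) by (simp add: k_def)
  assume "u \<noteq> 0" "cmod (Moebius_function 0 (g 0) (g u)) = cmod u"
  then obtain \<alpha> where "\<forall>z. norm z < 1 \<longrightarrow> k z = \<alpha> * z" "norm \<alpha> = 1"
    using S(3) un by (auto simp: k_def)
  then show "\<exists>\<alpha>. cmod \<alpha> = 1 \<and> (\<forall>w\<in>ball 0 1. Moebius_function 0 (g 0) (g w) = \<alpha> * w)"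
    by (auto simp: k_def)
qed

lemma real_ineq:
  fixes s r :: real
  assumes "0 \<le> s" "s \<le> 1" "0 < r" "r < 1" "2 * s \<le> r * (1 + s^2)"
  shows "s * (1 + sqrt (1 - r^2)) \<le> r"
proof -
  define c where "c = sqrt (1 - r^2)"
  have c0: "0 \<le> c" "c < 1" "c^2 = 1 - r^2" using assms unfolding c_def
  proof -
    have "r^2 < 1" using assms by (simp add: power_less_one_iff abs_less_iff)
    then show "0 \<le> sqrt (1 - r\<^sup>2)" "sqrt (1 - r\<^sup>2) < 1" "(sqrt (1 - r\<^sup>2))\<^sup>2 = 1 - r\<^sup>2"
      using assms by auto
  qed
  have key: "r * (1 + s^2) - 2 * s = r * (s - (1-c)/r) * (s - (1+c)/r)"
  proof -
    have "c * (c * r) = (1 - r*r) * r" using c0(3) by (simp add: power2_eq_square)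
    then show ?thesis using assms(3) by (simp add: field_simps power2_eq_square)
  qed
  have "(1+c)/r > 1" using c0 assms by (simp add: field_simps)
  then have neg: "s - (1+c)/r < 0" using assms by linarith
  have "s - (1-c)/r \<le> 0"
  proof (rule ccontr)
    assume "\<not> ?thesis"
    then have "r*(s - (1-c)/r) > 0" using assms by simp
    then have "r*(s - (1-c)/r)*(s - (1+c)/r) < 0" using neg mult_pos_neg by blast
    then show False using key assms by linarith
  qed
  then have "s*r \<le> 1 - c" using assms by (simp add: field_simps)
  then have "s*r*(1+c) \<le> (1-c)*(1+c)" using c0 by (simp add: mult_right_mono)
  also have "... = r*r" using c0(3) by (simp add: algebra_simps power2_eq_square)
  finally have "r * (s*(1+c)) \<le> r * r" by (simp add: algebra_simps)
  then show ?thesis unfolding c_def[symmetric] using assms by simp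
qed



lemma unit_facts:
  fixes l :: complex
  assumes "cmod l = 1"
  shows "(cmod (1 + l))\<^sup>2 = 2 + 2 * Re l" "Re l \<le> 1" "l \<noteq> 1 \<Longrightarrow> Re l < 1"
proof -
  have e: "(Re l)\<^sup>2 + (Im l)\<^sup>2 = 1" using assms cmod_power2[of l] by simp
  have "(cmod (1 + l))\<^sup>2 = (Re (1+l))\<^sup>2 + (Im (1+l))\<^sup>2" by (rule cmod_power2)
  also have "\<dots> = (1 + Re l)\<^sup>2 + (Im l)\<^sup>2" by simp
  also have "\<dots> = 2 + 2 * Re l" using e by (simp add: power2_eq_square algebra_simps)
  finally show "(cmod (1 + l))\<^sup>2 = 2 + 2 * Re l" .
  show "Re l \<le> 1" using complex_Re_le_cmod[of l] assms by simp
  show "Re l < 1" if "l \<noteq> 1"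
  proof (rule ccontr)
    assume "\<not> Re l < 1"
    then have "Re l = 1" using complex_Re_le_cmod[of l] assms by simp
    then have "Im l = 0" using e by simp
    then show False using that \<open>Re l = 1\<close> complex_eqI[of l 1] by simp
  qed
qed

lemma deriv_comp_lin:
  assumes holF: "F holomorphic_on ball 0 1"
  shows "((\<lambda>a. F (m * a)) has_field_derivative deriv F 0 * m) (at 0)"
proof -
  have "((\<lambda>a. m * a) has_field_derivative m) (at 0)" by (auto intro!: derivative_eq_intros)
  moreover have "(F has_field_derivative deriv F 0) (at (m * 0))"
    using holomorphic_derivI[OF holF open_ball, of 0] by simp
  ultimately show ?thesis using DERIV_chain'[of "\<lambda>a. m * a" m 0 UNIV F "deriv F 0"] by simp
qed



lemma rot_bound:
  fixes F :: "complex \<Rightarrow> complex"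
  assumes holF: "F holomorphic_on ball 0 1"
    and diam: "\<And>a b. a \<in> ball 0 1 \<Longrightarrow> b \<in> ball 0 1 \<Longrightarrow> cmod (F a - F b) \<le> 2"
    and odd: "\<And>a. a \<in> ball 0 1 \<Longrightarrow> F a - F (-a) = 2 * a"
    and l: "cmod l = 1" and u: "u \<in> ball 0 1"
  shows "cmod ((F u - u) - (F (l*u) - l*u)) \<le> (1 - Re l) / (1 - cmod u)"
proof (cases "l = 1")
  case True then show ?thesis by simp
next
  case False
  have un: "cmod u < 1" using u by simp
  have dF0: "deriv F 0 = 1"
  proof -
    have d1: "(F has_field_derivative deriv F 0) (at 0)"
      using holomorphic_derivI[OF holF open_ball, of 0] by simp
    have d2: "((\<lambda>a. F ((-1) * a)) has_field_derivative deriv F 0 * (-1)) (at 0)"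
      by (rule deriv_comp_lin[OF holF])
    have "((\<lambda>a. F a - F ((-1) * a)) has_field_derivative deriv F 0 - deriv F 0 * (-1)) (at 0)"
      by (rule DERIV_diff[OF d1 d2])
    then have "((\<lambda>a. 2 * a) has_field_derivative deriv F 0 - deriv F 0 * (-1)) (at 0)"
      by (rule has_field_derivative_transform_within_open[where S="ball 0 1"]) (use odd in auto)
    moreover have "((\<lambda>a. 2 * a) has_field_derivative 2) (at (0::complex))"
      by (auto intro!: derivative_eq_intros)
    ultimately have "deriv F 0 - deriv F 0 * (-1) = 2" by (rule DERIV_unique)
    then show ?thesis by simp
  qed
  define E where "E u = F u - F ((-l) * u)" for u
  have hol2: "(\<lambda>u. F ((-l) * u)) holomorphic_on ball 0 1"
  proof -
    have "(F \<circ> (\<lambda>u. (-l) * u)) holomorphic_on ball 0 1"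
      by (rule holomorphic_on_compose_gen[OF _ holF]) (auto intro!: holomorphic_intros simp: norm_mult l)
    then show ?thesis by (simp add: o_def)
  qed
  have holE: "E holomorphic_on ball 0 1" unfolding E_def
    by (intro holomorphic_intros holF hol2)
  have E0: "E 0 = 0" by (simp add: E_def)
  have dE: "deriv E 0 = 1 + l"
  proof -
    have d1: "(F has_field_derivative deriv F 0) (at 0)"
      using holomorphic_derivI[OF holF open_ball, of 0] by simp
    have "(E has_field_derivative deriv F 0 - deriv F 0 * (-l)) (at 0)"
      unfolding E_def[abs_def] by (rule DERIV_diff[OF d1 deriv_comp_lin[OF holF]])
    then show ?thesis using dF0 DERIV_imp_deriv by fastforce
  qed
  have Eb: "cmod (E z) \<le> 2" if "cmod z < 1" for z
    unfolding E_def using that by (intro diam) (auto simp: norm_mult l)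
  obtain h where holh: "h holomorphic_on ball 0 1" and Eh: "\<And>z. norm z < 1 \<Longrightarrow> E z = z * h z"
     and dh: "deriv E 0 = h 0"
    using Schwarz3[OF holE E0] by blast
  have Esch: "cmod (E z) \<le> 2 * cmod z" if z: "cmod z < 1" for z
  proof (rule ccontr)
    assume "\<not> ?thesis"
    then have gt: "2 * cmod z < cmod (E z)" by simp
    then have Epos: "0 < cmod (E z)" by (smt (verit) norm_ge_zero)
    define t where "t = (cmod (E z) + 2 * cmod z) / (2 * cmod (E z))"
    have t1: "t < 1" using gt Epos by (simp add: t_def field_simps)
    have t0: "0 < t" using Epos by (simp add: t_def add_pos_nonneg)
    have tE: "t * cmod (E z) > 2 * cmod z" using gt Epos by (simp add: t_def field_simps)
    have holt: "(\<lambda>u. (t/2) * E u) holomorphic_on ball 0 1" by (intro holomorphic_intros holE)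
    have bt: "norm ((t/2) * E u) < 1" if "norm u < 1" for u
    proof -
      have "norm ((t/2) * E u) = (t/2) * cmod (E u)" using t0 by (simp add: norm_mult)
      also have "\<dots> \<le> (t/2) * 2" using Eb[OF that] t0 by (intro mult_left_mono) auto
      finally show ?thesis using t1 by simp
    qed
    have "norm ((t/2) * E z) \<le> norm z"
      by (rule Schwarz_Lemma(1)[OF holt _ bt z]) (simp add: E0)
    then have "t * cmod (E z) \<le> 2 * cmod z" using t0 by (simp add: norm_mult)
    then show False using tE by simp
  qed
  have hb: "cmod (h z) \<le> 2" if z: "cmod z < 1" for z
  proof (cases "z = 0")
    case True
    then show ?thesis using dh dE norm_triangle_ineq[of 1 l] l by simp
  next
    case False
    then have "cmod z * cmod (h z) \<le> cmod z * 2" using Esch[OF z] Eh[OF z] by (simp add: norm_mult mult.commute)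
    then show ?thesis using False by simp
  qed
  define w0 where "w0 = (1 + l) / 2"
  define W where "W z = h z / 2" for z
  have W0: "W 0 = w0" using dh dE by (simp add: W_def w0_def)
  have w0sq: "(cmod w0)\<^sup>2 = (2 + 2 * Re l) / 4"
    using unit_facts(1)[OF l] by (simp add: w0_def norm_divide power_divide)
  have w01: "cmod w0 < 1"
  proof -
    have "(cmod w0)\<^sup>2 < 1" using w0sq unit_facts(3)[OF l False] by simp
    then show ?thesis by (simp add: power_less_one_iff abs_less_iff)
  qed
  have holW: "W holomorphic_on ball 0 1" unfolding W_def[abs_def] by (intro holomorphic_intros holh) auto
  have Wle: "cmod (W z) \<le> 1" if "z \<in> ball 0 1" for z using hb[of z] that by (simp add: W_def norm_divide)
  have Wlt: "cmod (W z) < 1" if z: "z \<in> ball 0 1" for z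
  proof (rule ccontr)
    assume "\<not> ?thesis"
    then have "cmod (W z) = 1" using Wle[OF z] by simp
    then have "W 0 = W z" using maxmod_const[OF holW Wle z] by simp
    then show False using W0 w01 \<open>cmod (W z) = 1\<close> by simp
  qed
  define k where "k = Moebius_function 0 w0 (W u)"
  have kb: "cmod k \<le> cmod u" using schwarz_pick(1)[OF holW Wlt u] by (simp add: k_def W0)
  have inv: "Moebius_function 0 (-w0) k = W u"
    unfolding k_def by (rule Moebius_function_compose) (use w01 Wlt[OF u] in auto)
  have kk: "cmod (cnj w0 * k) < 1"
  proof -
    have "cmod (cnj w0 * k) = cmod w0 * cmod k" by (simp add: norm_mult)
    also have "\<dots> \<le> cmod k" using w01 by (simp add: mult_left_le_one_le)
    finally show ?thesis using kb un by simp
  qed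
  have den: "1 + cnj w0 * k \<noteq> 0"
  proof
    assume "1 + cnj w0 * k = 0"
    then have "cnj w0 * k = -1" by (simp add: add_eq_0_iff)
    then show False using kk by simp
  qed
  have Wu: "W u = (k + w0) / (1 + cnj w0 * k)"
    using inv by (simp add: Moebius_function_def)
  have ident: "W u - w0 = k * (1 - w0 * cnj w0) / (1 + cnj w0 * k)"
    using den by (simp add: Wu field_simps)
  have A: "1 - w0 * cnj w0 = of_real (1 - (cmod w0)\<^sup>2)"
    using complex_norm_square[of w0] by simp
  have A0: "0 \<le> 1 - (cmod w0)\<^sup>2" using w01 by (simp add: power_le_one)
  have dn: "1 - cmod u \<le> cmod (1 + cnj w0 * k)"
  proof -
    have "1 \<le> cmod (1 + cnj w0 * k) + cmod (cnj w0 * k)"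
      using norm_triangle_ineq4[of "1 + cnj w0 * k" "cnj w0 * k"] by simp
    moreover have "cmod (cnj w0 * k) \<le> cmod u"
    proof -
      have "cmod (cnj w0 * k) = cmod w0 * cmod k" by (simp add: norm_mult)
      also have "\<dots> \<le> cmod k" using w01 by (simp add: mult_left_le_one_le)
      finally show ?thesis using kb by simp
    qed
    ultimately show ?thesis by simp
  qed
  have Wd: "cmod (W u - w0) \<le> cmod u * (1 - (cmod w0)\<^sup>2) / (1 - cmod u)"
  proof -
    have "cmod (W u - w0) = cmod k * (1 - (cmod w0)\<^sup>2) / cmod (1 + cnj w0 * k)"
    proof -
      have An: "cmod (1 - w0 * cnj w0) = 1 - (cmod w0)\<^sup>2"
        unfolding A norm_of_real using A0 by linarith
      show ?thesis unfolding ident norm_divide norm_mult An ..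
    qed
    also have "\<dots> \<le> cmod u * (1 - (cmod w0)\<^sup>2) / cmod (1 + cnj w0 * k)"
      using kb A0 by (intro divide_right_mono mult_right_mono) auto
    also have "\<dots> \<le> cmod u * (1 - (cmod w0)\<^sup>2) / (1 - cmod u)"
    proof (rule divide_left_mono)
      show "1 - cmod u \<le> cmod (1 + cnj w0 * k)" by (rule dn)
      show "0 \<le> cmod u * (1 - (cmod w0)\<^sup>2)" using A0 by simp
      have "0 < 1 - cmod u" using un by simp
      moreover have "0 < cmod (1 + cnj w0 * k)" using dn un by linarith
      ultimately show "0 < cmod (1 + cnj w0 * k) * (1 - cmod u)" by simp
    qed
    finally show ?thesis .
  qed
  have rel: "(F u - u) - (F (l*u) - l*u) = 2 * u * (W u - w0)"
  proof -
    have lu: "l * u \<in> ball 0 1" using u by (simp add: norm_mult l)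
    have o: "F (l*u) - F (-(l*u)) = 2 * (l*u)" by (rule odd[OF lu])
    have "E u = u * (2 * W u)" using Eh[OF un] by (simp add: W_def)
    then have "F u - F (-(l * u)) = u * (2 * W u)" by (simp add: E_def)
    then show ?thesis using o by (simp add: w0_def algebra_simps)
  qed
  have "cmod ((F u - u) - (F (l*u) - l*u)) = 2 * cmod u * cmod (W u - w0)"
    unfolding rel by (simp add: norm_mult)
  also have "\<dots> \<le> 2 * cmod u * (cmod u * (1 - (cmod w0)\<^sup>2) / (1 - cmod u))"
    using Wd by (intro mult_left_mono) auto
  also have "\<dots> \<le> 2 * (1 - (cmod w0)\<^sup>2) / (1 - cmod u)"
  proof -
    have "cmod u * cmod u \<le> 1" using un by (simp add: mult_le_one)
    then have "(cmod u * cmod u) * (1 - (cmod w0)\<^sup>2) \<le> 1 * (1 - (cmod w0)\<^sup>2)"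
      using A0 by (intro mult_right_mono) auto
    then have "2 * cmod u * (cmod u * (1 - (cmod w0)\<^sup>2)) \<le> 2 * (1 - (cmod w0)\<^sup>2)"
      by (simp add: algebra_simps)
    then show ?thesis using un by (simp add: divide_right_mono)
  qed
  also have "\<dots> = (1 - Re l) / (1 - cmod u)" using w0sq by simp
  finally show ?thesis .
qed



lemma one_minus_cos_le: "1 - cos (t::real) \<le> t^2 / 2"
proof -
  have c: "cos t = 1 - 2 * sin (t/2)^2" using cos_double_sin[of "t/2"] by simp
  have "\<bar>sin (t/2)\<bar>^2 \<le> \<bar>t/2\<bar>^2" by (rule power_mono) (use abs_sin_x_le_abs_x[of "t/2"] in auto)
  then have "sin (t/2)^2 \<le> (t/2)^2" by (simp add: power_divide)
  then show ?thesis using c by (simp add: power_divide)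
qed

lemma rigid:
  fixes F :: "complex \<Rightarrow> complex"
  assumes holF: "F holomorphic_on ball 0 1"
    and diam: "\<And>a b. a \<in> ball 0 1 \<Longrightarrow> b \<in> ball 0 1 \<Longrightarrow> cmod (F a - F b) \<le> 2"
    and odd: "\<And>a. a \<in> ball 0 1 \<Longrightarrow> F a - F (-a) = 2 * a"
  shows "\<exists>K. \<forall>a\<in>ball 0 1. F a = a + K"
proof -
  define q where "q a = F a - a" for a
  have qb: "cmod (q v - q (cis t * v)) \<le> t^2 / (2 * (1 - cmod v))" if v: "v \<in> ball 0 1" for v t
  proof -
    have "cmod (q v - q (cis t * v)) \<le> (1 - Re (cis t)) / (1 - cmod v)"
      unfolding q_def by (rule rot_bound[OF holF diam odd _ v]) auto
    also have "\<dots> \<le> (t^2/2) / (1 - cmod v)"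
      using v one_minus_cos_le[of t] by (intro divide_right_mono) auto
    finally show ?thesis by simp
  qed
  have rot: "q u = q (cis t * u)" if u: "u \<in> ball 0 1" for u t
  proof (rule ccontr)
    assume ne: "q u \<noteq> q (cis t * u)"
    define d where "d = cmod (q u - q (cis t * u))"
    have d0: "d > 0" using ne by (simp add: d_def)
    define C where "C = t^2 / (2 * (1 - cmod u))"
    have C0: "C \<ge> 0" using u by (simp add: C_def)
    obtain n::nat where n: "C / d < real n" using reals_Archimedean2 by blast
    have npos: "n > 0" proof -
      have "C / d \<ge> 0" using C0 d0 by simp
      then show ?thesis using n by (cases n) auto
    qed
    define a where "a k = q (cis (real k * t / n) * u)" for k::nat
    have step: "cmod (a k - a (Suc k)) \<le> C / (real n)^2" for k
    proof -
      define v where "v = cis (real k * t / n) * u"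
      have v: "v \<in> ball 0 1" "cmod v = cmod u" using u by (auto simp: v_def norm_mult)
      have eq: "cis (real (Suc k) * t / n) * u = cis (t/n) * v"
      proof -
        have e: "real (Suc k) * t / n = t/n + real k * t / n" by (simp add: add_divide_distrib[symmetric] algebra_simps)
        show ?thesis unfolding v_def e cis_mult[symmetric] by (simp add: mult.assoc)
      qed
      have "a (Suc k) = q (cis (t/n) * v)" unfolding a_def eq ..
      moreover have "a k = q v" by (simp add: a_def v_def)
      ultimately have "a k - a (Suc k) = q v - q (cis (t/n) * v)" by simp
      also have "cmod \<dots> \<le> (t/n)^2 / (2 * (1 - cmod v))" by (rule qb[OF v(1)])
      also have "\<dots> = C / (real n)^2" by (simp add: C_def v(2) power_divide)
      finally show ?thesis .
    qed
    have a0: "a 0 = q u" by (simp add: a_def)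
    have an: "a n = q (cis t * u)" using npos by (simp add: a_def)
    have "d = cmod (\<Sum>k<n. a k - a (Suc k))"
      unfolding sum_lessThan_telescope' d_def a0 an ..
    also have "\<dots> \<le> (\<Sum>k<n. cmod (a k - a (Suc k)))" by (rule norm_sum)
    also have "\<dots> \<le> (\<Sum>k<n. C / (real n)^2)" by (intro sum_mono step)
    also have "\<dots> = C / real n" using npos by (simp add: power2_eq_square)
    finally have "d \<le> C / real n" .
    then have "d * real n \<le> C" using npos by (simp add: field_simps)
    then have "real n \<le> C / d" using d0 by (simp add: field_simps)
    then show False using n by simp
  qed
  have sph: "q w - q (1/2) = 0" if w: "w \<in> sphere 0 (1/2)" for w
  proof -
    have "w = rcis (cmod w) (Arg w)" by (simp add: rcis_cmod_Arg)
    also have "\<dots> = cis (Arg w) * (1/2)"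
    proof -
      have h: "cmod w = 1/2" using w by simp
      show ?thesis unfolding rcis_def h by (simp add: mult.commute)
    qed
    finally have ww: "w = cis (Arg w) * (1/2)" .
    have "q (1/2) = q (cis (Arg w) * (1/2))" by (rule rot) simp
    also have "\<dots> = q w" using ww by metis
    finally show ?thesis by simp
  qed
  have lim: "(1/2::complex) islimpt sphere 0 (1/2)"
  proof (rule connected_imp_perfect)
    show "connected (sphere (0::complex) (1/2))" by (rule connected_sphere) simp
    show "(1/2::complex) \<in> sphere 0 (1/2)" by simp
    show "sphere (0::complex) (1/2) \<noteq> {x}" for x
    proof
      assume "sphere (0::complex) (1/2) = {x}"
      moreover have "(1/2::complex) \<in> sphere 0 (1/2)" "(-1/2::complex) \<in> sphere 0 (1/2)" by auto
      ultimately show False by auto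
    qed
  qed
  have holq: "(\<lambda>a. q a - q (1/2)) holomorphic_on ball 0 1"
    unfolding q_def by (intro holomorphic_intros holF)
  have "q a - q (1/2) = 0" if a: "a \<in> ball 0 1" for a
    by (rule analytic_continuation[OF holq open_ball connected_ball _ _ lim sph a]) auto
  then show ?thesis unfolding q_def by (intro exI[of _ "q (1/2)"]) (auto simp: q_def algebra_simps)
qed



lemma moeb_neg: "Moebius_function 0 z (- y) = - Moebius_function 0 (-z) y"
  by (simp add: Moebius_function_def minus_divide_left add.commute)

lemma main_core:
  fixes f :: "complex \<Rightarrow> complex"
  assumes hol: "f holomorphic_on ball 0 1"
    and diam: "\<And>a b. a \<in> ball 0 1 \<Longrightarrow> b \<in> ball 0 1 \<Longrightarrow> cmod (f a - f b) \<le> 2"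
    and z: "z \<in> ball 0 1" "z \<noteq> 0"
  shows "cmod (f z - f 0) \<le> cmod z * (2 / (1 + sqrt (1 - (cmod z)\<^sup>2)))"
    and "cmod (f z - f 0) = cmod z * (2 / (1 + sqrt (1 - (cmod z)\<^sup>2))) \<Longrightarrow>
         (\<exists>a b c. b \<in> ball 0 1 - {0} \<and> cmod c = 1 \<and>
              (\<forall>w\<in>ball 0 1. f w = c * ((w - b) / (1 - cnj b * w)) + a))"
proof -
  have zn: "cmod z < 1" using z by simp
  define r where "r = cmod z"
  have r0: "0 < r" "r < 1" using z by (auto simp: r_def)
  define c where "c = sqrt (1 - r^2)"
  have c0: "0 \<le> c" "c^2 = 1 - r^2"
  proof -
    have "r^2 < 1" using r0 by (simp add: power_less_one_iff)
    then show "0 \<le> c" "c^2 = 1 - r^2" by (auto simp: c_def)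
  qed
  define \<phi> where "\<phi> w = - Moebius_function 0 z w" for w
  have \<phi>b: "\<phi> w \<in> ball 0 1" if "w \<in> ball 0 1" for w
    using Moebius_function_norm_lt_1[OF zn, of w 0] that by (simp add: \<phi>_def)
  have \<phi>0: "\<phi> 0 = z" by (simp add: \<phi>_def Moebius_function_of_zero)
  have \<phi>z: "\<phi> z = 0" by (simp add: \<phi>_def Moebius_function_eq_zero)
  have \<phi>\<phi>: "\<phi> (\<phi> w) = w" if "w \<in> ball 0 1" for w
  proof -
    have "\<phi> (\<phi> w) = Moebius_function 0 (-z) (Moebius_function 0 z w)"
      by (simp add: \<phi>_def moeb_neg)
    also have "\<dots> = w" by (rule Moebius_function_compose) (use zn that in auto)
    finally show ?thesis .
  qed
  have hol\<phi>: "\<phi> holomorphic_on ball 0 1"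
    unfolding \<phi>_def[abs_def] using Moebius_function_holomorphic[OF zn] by (intro holomorphic_intros) auto
  define g where "g w = (f w - f (\<phi> w)) / 2" for w
  have holg: "g holomorphic_on ball 0 1"
  proof -
    have "(f \<circ> \<phi>) holomorphic_on ball 0 1"
      by (rule holomorphic_on_compose_gen[OF hol\<phi> hol]) (use \<phi>b in auto)
    then show ?thesis unfolding g_def[abs_def] using hol by (intro holomorphic_intros) (auto simp: o_def)
  qed
  have gle: "cmod (g w) \<le> 1" if "w \<in> ball 0 1" for w
    using diam[OF that \<phi>b[OF that]] by (simp add: g_def norm_divide)
  have g0: "g 0 = (f 0 - f z) / 2" unfolding g_def \<phi>0 ..
  have gz: "g z = - g 0" unfolding g0 by (simp add: g_def \<phi>z field_simps)
  define s where "s = cmod (g 0)"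
  have s_eq: "cmod (f z - f 0) = 2 * s" by (simp add: s_def g0 norm_divide norm_minus_commute)
  have glt: "cmod (g w) < 1" if w: "w \<in> ball 0 1" and sp: "s > 0" for w
  proof (rule ccontr)
    assume "\<not> ?thesis"
    then have e: "cmod (g w) = 1" using gle[OF w] by simp
    have "g z = g w" by (rule maxmod_const[OF holg gle w e z(1)])
    moreover have "g 0 = g w" by (rule maxmod_const[OF holg gle w e]) auto
    ultimately have "g 0 = 0" using gz by simp
    then show False using sp by (simp add: s_def)
  qed
  have s1: "s \<le> 1" using gle[of 0] by (simp add: s_def)
  have SP: "2 * s \<le> r * (1 + s^2)" and SPeq: "2 * s = r * (1 + s^2) \<Longrightarrow>
      \<exists>\<alpha>. cmod \<alpha> = 1 \<and> (\<forall>w\<in>ball 0 1. Moebius_function 0 (g 0) (g w) = \<alpha> * w)"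
    if sp: "s > 0"
  proof -
    have glt': "\<And>w. w \<in> ball 0 1 \<Longrightarrow> cmod (g w) < 1" using glt sp by blast
    have M: "cmod (Moebius_function 0 (g 0) (g z)) = 2 * s / (1 + s^2)"
    proof -
      have e1: "1 + cnj (g 0) * g 0 = of_real (1 + s^2)"
        using complex_norm_square[of "g 0"] by (simp add: s_def mult.commute)
      have D: "cmod (1 + cnj (g 0) * g 0) = 1 + s^2"
        unfolding e1 norm_of_real by (simp add: add_pos_nonneg)
      have "Moebius_function 0 (g 0) (g z) = - (2 * g 0) / (1 + cnj (g 0) * g 0)"
        by (simp add: Moebius_function_def gz)
      then show ?thesis by (simp add: norm_divide D s_def norm_mult)
    qed
    have "2 * s / (1 + s^2) \<le> r"
      using schwarz_pick(1)[OF holg glt' z(1)] M by (simp add: r_def)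
    then show "2 * s \<le> r * (1 + s^2)" by (simp add: field_simps add_pos_nonneg)
    assume a2: "2 * s = r * (1 + s^2)"
    have p1: "(1::real) + s^2 > 0" by (simp add: add_pos_nonneg)
    have "2 * s / (1 + s^2) = r" unfolding a2 using p1 by simp
    then show "\<exists>\<alpha>. cmod \<alpha> = 1 \<and> (\<forall>w\<in>ball 0 1. Moebius_function 0 (g 0) (g w) = \<alpha> * w)"
      using schwarz_pick(2)[OF holg glt' z(1) z(2)] M by (simp add: r_def)
  qed
  show ineq: "cmod (f z - f 0) \<le> cmod z * (2 / (1 + sqrt (1 - (cmod z)\<^sup>2)))"
  proof (cases "s = 0")
    case True
    then show ?thesis using s_eq c0 r0 by (simp add: r_def[symmetric] c_def[symmetric])
  next
    case False
    then have sp: "s > 0" by (simp add: s_def)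
    have "s * (1 + sqrt (1 - r^2)) \<le> r"
      by (rule real_ineq) (use sp s1 r0 SP[OF sp] in auto)
    then have "s \<le> r / (1 + c)" using c0 by (simp add: c_def field_simps add_pos_nonneg)
    then show ?thesis using s_eq c0 by (simp add: r_def[symmetric] c_def[symmetric] field_simps)
  qed
  assume eq: "cmod (f z - f 0) = cmod z * (2 / (1 + sqrt (1 - (cmod z)\<^sup>2)))"
  then have sv: "s = r / (1 + c)" using s_eq c0 by (simp add: r_def[symmetric] c_def[symmetric] field_simps)
  then have sp: "s > 0" using r0 c0 by (simp add: add_pos_nonneg)
  have "2 * s = r * (1 + s^2)"
  proof -
    have p: "0 < 1 + c" using c0 by simp
    have q: "(1+c)^2 > 0" using p by simp
    have "1 + s^2 = ((1+c)^2 + r^2) / (1+c)^2" using q by (simp add: sv power_divide add_divide_distrib)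
    then have "r * (1 + s^2) = r * ((1+c)^2 + r^2) / (1+c)^2" by simp
    also have "(1+c)^2 + r^2 = 2 * (1 + c)" using c0(2) by (simp add: power2_eq_square algebra_simps)
    also have "r * (2 * (1 + c)) / (1 + c)^2 = 2 * (r / (1+c))"
    proof -
      have "r * (2 * (1 + c)) / (1 + c)^2 = ((2 * r) * (1 + c)) / ((1 + c) * (1 + c))"
        by (simp add: power2_eq_square algebra_simps)
      also have "\<dots> = (2 * r) / (1 + c)" using p by (rule mult_divide_mult_cancel_right[OF less_imp_neq[symmetric]])
      finally show ?thesis by simp
    qed
    finally show ?thesis by (simp add: sv)
  qed
  then obtain \<alpha> where \<alpha>: "cmod \<alpha> = 1" and M: "\<And>w. w \<in> ball 0 1 \<Longrightarrow> Moebius_function 0 (g 0) (g w) = \<alpha> * w"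
    using SPeq[OF sp] by blast
  have w0n: "g 0 \<noteq> 0" using sp by (simp add: s_def)
  have glt': "\<And>w. w \<in> ball 0 1 \<Longrightarrow> cmod (g w) < 1" using glt sp by blast
  have w01: "cmod (g 0) < 1" using glt'[of 0] by simp
  have aa: "\<alpha> * cnj \<alpha> = 1" using complex_norm_square[of \<alpha>] \<alpha> by simp
  have ginv: "g w = Moebius_function 0 (- g 0) (\<alpha> * w)" if w: "w \<in> ball 0 1" for w
  proof -
    have "Moebius_function 0 (- g 0) (Moebius_function 0 (g 0) (g w)) = g w"
      by (rule Moebius_function_compose) (use w01 glt'[OF w] in auto)
    then show ?thesis using M[OF w] by simp
  qed
  define \<psi> where "\<psi> a = cnj \<alpha> * Moebius_function 0 (g 0) a" for a
  have \<psi>b: "\<psi> a \<in> ball 0 1" if "a \<in> ball 0 1" for a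
    using Moebius_function_norm_lt_1[OF w01, of a 0] that \<alpha> by (simp add: \<psi>_def norm_mult)
  have g\<psi>: "g (\<psi> a) = a" if a: "a \<in> ball 0 1" for a
  proof -
    have "g (\<psi> a) = Moebius_function 0 (- g 0) (\<alpha> * (cnj \<alpha> * Moebius_function 0 (g 0) a))"
      using ginv[OF \<psi>b[OF a]] by (simp add: \<psi>_def)
    also have "\<alpha> * (cnj \<alpha> * Moebius_function 0 (g 0) a) = Moebius_function 0 (g 0) a"
      by (simp add: mult.assoc[symmetric] aa)
    also have "Moebius_function 0 (- g 0) (Moebius_function 0 (g 0) a) = a"
      by (rule Moebius_function_compose) (use w01 a in auto)
    finally show ?thesis .
  qed
  have \<psi>g: "\<psi> (g w) = w" if w: "w \<in> ball 0 1" for w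
  proof -
    have "\<psi> (g w) = cnj \<alpha> * (\<alpha> * w)" using M[OF w] by (simp add: \<psi>_def)
    also have "\<dots> = w" by (simp add: mult.assoc[symmetric] aa mult.commute[of "cnj \<alpha>"])
    finally show ?thesis .
  qed
  define F where "F = f \<circ> \<psi>"
  have hol\<psi>: "\<psi> holomorphic_on ball 0 1"
    unfolding \<psi>_def[abs_def] using Moebius_function_holomorphic[OF w01] by (intro holomorphic_intros) auto
  have holF: "F holomorphic_on ball 0 1" unfolding F_def
    by (rule holomorphic_on_compose_gen[OF hol\<psi> hol]) (use \<psi>b in auto)
  have diamF: "cmod (F a - F b) \<le> 2" if "a \<in> ball 0 1" "b \<in> ball 0 1" for a b
    unfolding F_def o_def using that by (intro diam \<psi>b)
  have oddF: "F a - F (-a) = 2 * a" if a: "a \<in> ball 0 1" for a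
  proof -
    define w where "w = \<psi> a"
    have w: "w \<in> ball 0 1" using \<psi>b[OF a] by (simp add: w_def)
    have gw: "g w = a" using g\<psi>[OF a] by (simp add: w_def)
    have "g (\<phi> w) = (f (\<phi> w) - f w) / 2" using \<phi>\<phi>[OF w] by (simp add: g_def)
    also have "\<dots> = - g w" by (simp add: g_def field_simps)
    finally have g\<phi>: "g (\<phi> w) = - a" using gw by simp
    have ma: "-a \<in> ball 0 1" using a by simp
    have "\<phi> w = \<psi> (g (\<phi> w))" using \<psi>g[OF \<phi>b[OF w]] by simp
    also have "\<dots> = \<psi> (-a)" using g\<phi> by simp
    finally have e: "\<psi> (-a) = \<phi> w" by simp
    have "F a - F (-a) = f w - f (\<phi> w)" by (simp add: F_def w_def e)
    also have "\<dots> = 2 * g w" by (simp add: g_def)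
    finally show ?thesis using gw by simp
  qed
  obtain K where K: "\<And>a. a \<in> ball 0 1 \<Longrightarrow> F a = a + K" using rigid[OF holF diamF oddF] by blast
  define b where "b = - (g 0 * cnj \<alpha>)"
  have bb: "b \<in> ball 0 1 - {0}" using w01 w0n \<alpha> by (auto simp: b_def norm_mult)
  have fw: "f w = \<alpha> * ((w - b) / (1 - cnj b * w)) + K" if w: "w \<in> ball 0 1" for w
  proof -
    have "f w = F (g w)" using \<psi>g[OF w] by (simp add: F_def)
    also have "\<dots> = g w + K" using K glt'[OF w] by simp
    also have "g w = (\<alpha> * w + g 0) / (1 + cnj (g 0) * (\<alpha> * w))"
      using ginv[OF w] by (simp add: Moebius_function_def)
    also have "\<alpha> * w + g 0 = \<alpha> * (w - b)"
    proof -
      have "\<alpha> * (w - b) = \<alpha> * w + g 0 * (\<alpha> * cnj \<alpha>)" by (simp add: b_def algebra_simps)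
      then show ?thesis by (simp add: aa)
    qed
    also have "1 + cnj (g 0) * (\<alpha> * w) = 1 - cnj b * w" by (simp add: b_def algebra_simps)
    finally show ?thesis by simp
  qed
  show "\<exists>a b c. b \<in> ball 0 1 - {0} \<and> cmod c = 1 \<and> (\<forall>w\<in>ball 0 1. f w = c * ((w - b) / (1 - cnj b * w)) + a)"
    using bb \<alpha> fw by blast
qed



lemma converse:
  fixes f :: "complex \<Rightarrow> complex"
  assumes b: "b \<in> ball 0 1 - {0}" and c: "cmod c = 1"
    and fe: "\<forall>z\<in>ball 0 1. f z = c * ((z - b) / (1 - cnj b * z)) + a"
  shows "\<exists>z\<in>ball 0 1 - {0}. cmod (f z - f 0) = cmod z * (2 / (1 + sqrt (1 - (cmod z)\<^sup>2)))"
proof -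
  define t where "t = cmod b"
  have t: "0 < t" "t < 1" using b by (auto simp: t_def)
  define \<beta> where "\<beta> = 2 / (1 + t^2)"
  have p: "0 < 1 + t^2" by (simp add: add_pos_nonneg)
  have \<beta>1: "\<beta> * (1 + t^2) = 2" using p unfolding \<beta>_def by (simp add: field_simps)
  have t2: "t^2 < 1" using t by (simp add: power_less_one_iff)
  have \<beta>g: "1 < \<beta>" using p t2 by (simp add: \<beta>_def field_simps)
  have \<beta>t: "\<beta> * t < 1"
  proof -
    have "0 < (1 - t)^2" using t by simp
    then have "2 * t < 1 + t^2" by (simp add: power2_eq_square algebra_simps)
    then show ?thesis using p by (simp add: \<beta>_def field_simps)
  qed
  define z where "z = of_real \<beta> * b"
  have nz: "cmod z = \<beta> * t" using \<beta>g by (simp add: z_def norm_mult t_def)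
  have zb: "z \<in> ball 0 1 - {0}" using nz \<beta>t \<beta>g b by (auto simp: z_def)
  have cb: "cnj b * b = of_real (t^2)" using complex_norm_square[of b] by (simp add: t_def mult.commute)
  have d1: "1 - cnj b * z = of_real (\<beta> - 1)"
  proof -
    have "1 - cnj b * z = 1 - of_real \<beta> * (cnj b * b)" by (simp add: z_def algebra_simps)
    also have "\<dots> = of_real (1 - \<beta> * t^2)" by (simp add: cb)
    also have "1 - \<beta> * t^2 = \<beta> - 1" using \<beta>1 by (simp add: algebra_simps)
    finally show ?thesis .
  qed
  have n1: "z - b = of_real (\<beta> - 1) * b" by (simp add: z_def algebra_simps)
  have q: "(z - b) / (1 - cnj b * z) = b" unfolding d1 n1 using \<beta>g by simp
  have f0: "f 0 = c * (- b) + a" using fe by simp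
  have "f z = c * ((z - b) / (1 - cnj b * z)) + a" using fe zb by blast
  then have fz: "f z = c * b + a" unfolding q .
  have lhs: "cmod (f z - f 0) = 2 * t" by (simp add: fz f0 norm_mult c t_def)
  have sq: "sqrt (1 - (cmod z)\<^sup>2) = \<beta> - 1"
  proof -
    have "1 - (cmod z)\<^sup>2 = (\<beta> - 1)^2"
    proof -
      have "(\<beta> - 1)^2 = \<beta> * (\<beta> * (1 + t^2)) - 2 * \<beta> + 1 - \<beta>^2 * t^2"
        by (simp add: power2_eq_square algebra_simps)
      also have "\<dots> = 1 - \<beta>^2 * t^2" using \<beta>1 by simp
      finally show ?thesis by (simp add: nz power_mult_distrib)
    qed
    then show ?thesis using \<beta>g by simp
  qed
  have "cmod z * (2 / (1 + sqrt (1 - (cmod z)\<^sup>2))) = 2 * t"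
    unfolding sq unfolding nz using \<beta>g by simp
  then have "cmod (f z - f 0) = cmod z * (2 / (1 + sqrt (1 - (cmod z)\<^sup>2)))" using lhs by simp
  then show ?thesis using zb by blast
qed


theorem theorem8p1:
  fixes f :: "complex \<Rightarrow> complex"
  assumes "f analytic_on ball 0 1"
    and "Diam_le f (ball 0 1) 2"
  shows "(\<forall>z\<in>ball 0 1. cmod (f z - f 0) \<le> cmod z * (2 / (1 + sqrt (1 - (cmod z)\<^sup>2))))
    \<and> ((\<exists>z\<in>ball 0 1 - {0}. cmod (f z - f 0) = cmod z * (2 / (1 + sqrt (1 - (cmod z)\<^sup>2))))
        \<longleftrightarrow> (\<exists>a b c. b \<in> ball 0 1 - {0} \<and> cmod c = 1 \<and>
              (\<forall>z\<in>ball 0 1. f z = c * ((z - b) / (1 - cnj b * z)) + a)))"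
proof -
  have hol: "f holomorphic_on ball 0 1" using assms(1) by (rule analytic_imp_holomorphic)
  have diam: "\<And>a b. a \<in> ball 0 1 \<Longrightarrow> b \<in> ball 0 1 \<Longrightarrow> cmod (f a - f b) \<le> 2"
    using assms(2) unfolding Diam_le_def by blast
  have P1: "\<forall>z\<in>ball 0 1. cmod (f z - f 0) \<le> cmod z * (2 / (1 + sqrt (1 - (cmod z)\<^sup>2)))"
  proof
    fix z :: complex assume z: "z \<in> ball 0 1"
    show "cmod (f z - f 0) \<le> cmod z * (2 / (1 + sqrt (1 - (cmod z)\<^sup>2)))"
    proof (cases "z = 0")
      case True then show ?thesis by simp
    next
      case False then show ?thesis using main_core(1)[OF hol diam z] by blast
    qed
  qed
  have P2: "(\<exists>z\<in>ball 0 1 - {0}. cmod (f z - f 0) = cmod z * (2 / (1 + sqrt (1 - (cmod z)\<^sup>2))))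
        \<longleftrightarrow> (\<exists>a b c. b \<in> ball 0 1 - {0} \<and> cmod c = 1 \<and>
              (\<forall>z\<in>ball 0 1. f z = c * ((z - b) / (1 - cnj b * z)) + a))"
  proof
    assume "\<exists>z\<in>ball 0 1 - {0}. cmod (f z - f 0) = cmod z * (2 / (1 + sqrt (1 - (cmod z)\<^sup>2)))"
    then obtain z where z: "z \<in> ball 0 1" "z \<noteq> 0"
      and e: "cmod (f z - f 0) = cmod z * (2 / (1 + sqrt (1 - (cmod z)\<^sup>2)))" by blast
    show "\<exists>a b c. b \<in> ball 0 1 - {0} \<and> cmod c = 1 \<and>
              (\<forall>z\<in>ball 0 1. f z = c * ((z - b) / (1 - cnj b * z)) + a)"
      by (rule main_core(2)[OF hol diam z e])
  next
    assume "\<exists>a b c. b \<in> ball 0 1 - {0} \<and> cmod c = 1 \<and>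
              (\<forall>z\<in>ball 0 1. f z = c * ((z - b) / (1 - cnj b * z)) + a)"
    then obtain a b c where "b \<in> ball 0 1 - {0}" "cmod c = 1"
      "\<forall>z\<in>ball 0 1. f z = c * ((z - b) / (1 - cnj b * z)) + a" by blast
    then show "\<exists>z\<in>ball 0 1 - {0}. cmod (f z - f 0) = cmod z * (2 / (1 + sqrt (1 - (cmod z)\<^sup>2)))"
      by (rule converse)
  qed
  show ?thesis using P1 P2 by blast
qed

end
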